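(* Let $1<p<\infty$ and $0<s_1<s_2<1$. Then for all $u\in L^p(\mathbb R^n)$, $$J^1_{s_1,p}(u)\le 2^{(1-s_1)p}J^1_{s_2,p}(u)+\frac{(1-s_1)2^{p+1}}{p}\|u\|_p^p.$$
   Context: Let $e_1=(1,0,\dots,0)$ and for $s\in(0,1)$, $J^1_{s,p}(u)=s(1-s)\int_{\mathbb R^n}\int_{\mathbb R}\frac{|u(x+he_1)-u(x)|^p}{|h|^{1+sp}}dh\,dx\in[0,\infty]$. Here $s_1,s_2$ are real numbers (not coordinates of a vector). *)

theory Defs
  imports "HOL-Analysis.Analysis"
begin

text \<open>Space R^n is modelled as real^'n, the index type carrying a well-order so that the
  first coordinate (and hence e_1) makes sense.\<close>

definition e1 :: "real ^ 'n::{finite,wellorder}" where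
  "e1 = axis (LEAST i::'n. True) 1"

definition J1 :: "real \<Rightarrow> real \<Rightarrow> (real ^ 'n::{finite,wellorder} \<Rightarrow> real) \<Rightarrow> ennreal" where
  "J1 s p u = ennreal (s * (1 - s)) *
     (\<integral>\<^sup>+ x. (\<integral>\<^sup>+ h. ennreal (\<bar>u (x + h *\<^sub>R e1) - u x\<bar> powr p / \<bar>h\<bar> powr (1 + s * p)) \<partial>lborel) \<partial>lborel)"

definition in_Lp :: "real \<Rightarrow> (real ^ 'n::{finite,wellorder} \<Rightarrow> real) \<Rightarrow> bool" where
  "in_Lp p u \<longleftrightarrow> u \<in> borel_measurable lborel \<and> integrable lborel (\<lambda>x. \<bar>u x\<bar> powr p)"

end

theory Submission
  imports Defs
begin

lemma powr_half_sum:
  fixes x y p :: real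
  assumes "p \<ge> 1" "x \<ge> 0" "y \<ge> 0"
  shows "(x + y) powr p \<le> 2 powr (p - 1) * (x powr p + y powr p)"
proof -
  have key: "((x + y)/2) powr p \<le> (x powr p + y powr p) / 2"
  proof (cases "x = 0 \<or> y = 0")
    case True
    have g: "z powr p / 2 powr p \<le> z powr p / 2" if "z \<ge> 0" for z :: real
    proof -
      have "2 powr 1 \<le> 2 powr p" using assms by (intro powr_mono) auto
      then show ?thesis using that by (intro divide_left_mono) auto
    qed
    from True show ?thesis
      using g[OF assms(2)] g[OF assms(3)] assms by (auto simp: powr_divide)
  next
    case False
    then have "x > 0" "y > 0" using assms by auto
    from convex_onD[OF powr_convex[OF assms(1)], of "1/2" x y] this
    show ?thesis by (auto simp: field_simps)
  qed
  have "(x + y) powr p = 2 powr p * ((x + y)/2) powr p"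
    using assms by (simp add: powr_divide)
  also have "\<dots> \<le> 2 powr p * ((x powr p + y powr p) / 2)"
    using key by (intro mult_left_mono) auto
  also have "\<dots> = 2 powr (p - 1) * (x powr p + y powr p)"
    by (simp add: powr_diff)
  finally show ?thesis .
qed

lemma abs_sum_powr:
  fixes a b p :: real
  assumes "p \<ge> 1"
  shows "\<bar>a + b\<bar> powr p \<le> 2 powr (p - 1) * (\<bar>a\<bar> powr p + \<bar>b\<bar> powr p)"
proof -
  have "\<bar>a + b\<bar> powr p \<le> (\<bar>a\<bar> + \<bar>b\<bar>) powr p"
    using assms by (intro powr_mono2) auto
  also have "\<dots> \<le> 2 powr (p - 1) * (\<bar>a\<bar> powr p + \<bar>b\<bar> powr p)" by (rule powr_half_sum) (use assms in auto)
  finally show ?thesis .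
qed


lemma suminf_swap_ennreal:
  fixes f :: "nat \<Rightarrow> nat \<Rightarrow> ennreal"
  shows "(\<Sum>m. \<Sum>k. f m k) = (\<Sum>k. \<Sum>m. f m k)"
proof -
  have "(\<Sum>m. \<Sum>k. f m k) = (\<integral>\<^sup>+m. (\<Sum>k. f m k) \<partial>count_space UNIV)"
    by (simp add: nn_integral_count_space_nat)
  also have "\<dots> = (\<Sum>k. \<integral>\<^sup>+m. f m k \<partial>count_space UNIV)"
    by (rule nn_integral_suminf) auto
  also have "\<dots> = (\<Sum>k. \<Sum>m. f m k)"
    by (simp add: nn_integral_count_space_nat)
  finally show ?thesis .
qed

lemma geom_tail_ennreal:
  fixes q :: real and k :: nat
  assumes "0 \<le> q" "q < 1"
  shows "(\<Sum>m. ennreal (if k \<le> m then q ^ m else 0)) = ennreal (q ^ k / (1 - q))"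
proof -
  have "(\<lambda>i. q ^ (i + k)) sums (q ^ k * (1 / (1 - q)))"
    unfolding power_add using sums_mult2[OF geometric_sums[of q], of "q^k"] assms
    by (simp add: mult.commute)
  then have "(\<lambda>i. (\<lambda>m. if k \<le> m then q ^ m else 0) (i + k)) sums (q ^ k / (1 - q))"
    by simp
  then have "(\<lambda>m. if k \<le> m then q ^ m else 0) sums (q ^ k / (1 - q) + (\<Sum>i<k. (\<lambda>m. if k \<le> m then q ^ m else 0) i))"
    by (subst (asm) sums_iff_shift)
  then have "(\<lambda>m. if k \<le> m then q ^ m else 0) sums (q ^ k / (1 - q))" by simp
  then show ?thesis
    using assms by (intro suminf_ennreal_eq) auto
qed

lemma abel_geom_ennreal:
  fixes d :: "nat \<Rightarrow> ennreal" and q :: real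
  assumes "0 \<le> q" "q < 1"
  shows "ennreal (1 - q) * (\<Sum>m. ennreal (q ^ m) * (\<Sum>k\<le>m. d k)) = (\<Sum>k. ennreal (q ^ k) * d k)"
proof -
  have "(\<Sum>m. ennreal (q ^ m) * (\<Sum>k\<le>m. d k)) = (\<Sum>m. \<Sum>k. (if k \<le> m then ennreal (q ^ m) * d k else 0))"
  proof (rule suminf_cong)
    fix m
    have "(\<Sum>k. (if k \<le> m then ennreal (q ^ m) * d k else 0)) = (\<Sum>k\<le>m. (if k \<le> m then ennreal (q ^ m) * d k else 0))"
      by (rule suminf_finite) auto
    then show "ennreal (q ^ m) * (\<Sum>k\<le>m. d k) = (\<Sum>k. (if k \<le> m then ennreal (q ^ m) * d k else 0))"
      by (simp add: sum_distrib_left)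
  qed
  also have "\<dots> = (\<Sum>k. \<Sum>m. (if k \<le> m then ennreal (q ^ m) * d k else 0))"
    by (rule suminf_swap_ennreal)
  also have "\<dots> = (\<Sum>k. (\<Sum>m. ennreal (if k \<le> m then q ^ m else 0)) * d k)"
  proof (rule suminf_cong)
    fix k
    have "(\<Sum>m. (if k \<le> m then ennreal (q ^ m) * d k else 0)) = (\<Sum>m. ennreal (if k \<le> m then q ^ m else 0) * d k)"
      by (rule suminf_cong) simp
    also have "\<dots> = (\<Sum>m. ennreal (if k \<le> m then q ^ m else 0)) * d k"
      by (rule ennreal_suminf_multc)
    finally show "(\<Sum>m. (if k \<le> m then ennreal (q ^ m) * d k else 0)) = (\<Sum>m. ennreal (if k \<le> m then q ^ m else 0)) * d k" .
  qed
  also have "\<dots> = (\<Sum>k. ennreal (q ^ k / (1 - q)) * d k)"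
    using geom_tail_ennreal[OF assms] by simp
  finally have "ennreal (1 - q) * (\<Sum>m. ennreal (q ^ m) * (\<Sum>k\<le>m. d k)) = (\<Sum>k. ennreal (1 - q) * (ennreal (q ^ k / (1 - q)) * d k))"
    by simp
  also have "\<dots> = (\<Sum>k. ennreal (q ^ k) * d k)"
  proof (rule suminf_cong)
    fix k
    have "ennreal (1 - q) * ennreal (q ^ k / (1 - q)) = ennreal (q ^ k)"
      using assms by (simp add: ennreal_mult[symmetric])
    then show "ennreal (1 - q) * (ennreal (q ^ k / (1 - q)) * d k) = ennreal (q ^ k) * d k"
      by (metis mult.assoc)
  qed
  finally show ?thesis .
qed

lemma incseq_ennreal_decomp:
  fixes \<Phi> :: "nat \<Rightarrow> ennreal"
  assumes "incseq \<Phi>"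
  obtains d where "\<And>m. \<Phi> m = (\<Sum>k\<le>m. d k)"
proof -
  have "\<forall>k. \<exists>c. \<Phi> (Suc k) = \<Phi> k + c"
    using assms by (auto simp: incseq_Suc_iff le_iff_add)
  then obtain c where c: "\<And>k. \<Phi> (Suc k) = \<Phi> k + c k" by metis
  define d where "d k = (case k of 0 \<Rightarrow> \<Phi> 0 | Suc j \<Rightarrow> c j)" for k
  have "\<Phi> m = (\<Sum>k\<le>m. d k)" for m
    by (induction m) (auto simp: d_def c)
  then show ?thesis using that by blast
qed

lemma geom_mono:
  fixes \<Phi> :: "nat \<Rightarrow> ennreal" and q1 q2 :: real
  assumes "incseq \<Phi>" "0 \<le> q1" "q1 \<le> q2" "q2 < 1"
  shows "ennreal (1 - q1) * (\<Sum>m. ennreal (q1 ^ m) * \<Phi> m)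
       \<le> ennreal (1 - q2) * (\<Sum>m. ennreal (q2 ^ m) * \<Phi> m)"
proof -
  obtain d where d: "\<And>m. \<Phi> m = (\<Sum>k\<le>m. d k)" using incseq_ennreal_decomp[OF assms(1)] by blast
  have "ennreal (1 - q1) * (\<Sum>m. ennreal (q1 ^ m) * \<Phi> m) = (\<Sum>k. ennreal (q1 ^ k) * d k)"
    unfolding d by (rule abel_geom_ennreal) (use assms in auto)
  also have "\<dots> \<le> (\<Sum>k. ennreal (q2 ^ k) * d k)"
    using assms by (intro suminf_le mult_right_mono ennreal_leI power_mono) auto
  also have "\<dots> = ennreal (1 - q2) * (\<Sum>m. ennreal (q2 ^ m) * \<Phi> m)"
    unfolding d by (rule abel_geom_ennreal[symmetric]) (use assms in auto)
  finally show ?thesis .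
qed


lemma shells_indicator:
  fixes h :: real
  shows "(indicator {0<..1} h :: ennreal) = (\<Sum>m. indicator {(1/2)^m/2<..(1/2)^m} h)"
proof (cases "h \<in> {0<..1}")
  case False
  have "(1/2::real)^m \<le> 1" for m by (simp add: power_le_one)
  then have "indicator {(1/2)^m/2<..(1/2)^m} h = (0::ennreal)" for m
    using False by (auto simp: indicator_def) (smt (verit) zero_less_power)
  then show ?thesis using False by simp
next
  case True
  then have h: "0 < h" "h \<le> 1" by auto
  obtain n where n: "(1/2::real)^n < h" using real_arch_pow_inv[OF h(1), of "1/2"] by auto
  define k where "k = (LEAST n. (1/2::real)^n < h)"
  have k1: "(1/2::real)^k < h" unfolding k_def by (rule LeastI[of _ n]) (rule n)
  have k0: "k \<noteq> 0" using k1 h by (cases k) auto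
  then obtain m where m: "k = Suc m" by (cases k) auto
  have "\<not> (1/2::real)^m < h" using not_less_Least[of m "\<lambda>n. (1/2::real)^n < h"] m unfolding k_def by auto
  then have hm: "h \<in> {(1/2)^m/2<..(1/2)^m}" using k1 m by auto
  have other: "indicator {(1/2)^j/2<..(1/2)^j} h = (0::ennreal)" if "j \<noteq> m" for j
  proof (rule ccontr)
    assume "indicator {(1/2)^j/2<..(1/2)^j} h \<noteq> (0::ennreal)"
    then have hj: "h \<in> {(1/2)^j/2<..(1/2)^j}" by (auto simp: indicator_def split: if_splits)
    show False
    proof (cases "j < m")
      case True
      then have "(1/2::real)^m \<le> (1/2)^(Suc j)" by (intro power_decreasing) auto
      then show False using hj hm by auto
    next
      case False
      with that have "m < j" by auto
      then have "(1/2::real)^j \<le> (1/2)^(Suc m)" by (intro power_decreasing) auto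
      then show False using hj hm by auto
    qed
  qed
  have "(\<Sum>j. indicator {(1/2)^j/2<..(1/2)^j} h :: ennreal) = (\<Sum>j\<in>{m}. indicator {(1/2)^j/2<..(1/2)^j} h)"
    by (rule suminf_finite) (use other in auto)
  then show ?thesis using hm True by simp
qed

lemma w_scale:
  fixes c y s p :: real
  assumes "0 < c" "0 < y"
  shows "c * (1 / \<bar>c * y\<bar> powr (1 + s * p)) = c powr (- (s * p)) * (1 / \<bar>y\<bar> powr (1 + s * p))"
proof -
  have "\<bar>c * y\<bar> powr (1 + s * p) = c powr (1 + s*p) * y powr (1 + s*p)"
    using assms by (simp add: abs_mult powr_mult)
  moreover have "c powr (1 + s*p) = c * c powr (s * p)" using assms by (simp add: powr_add)
  ultimately show ?thesis using assms by (simp add: powr_minus field_simps)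
qed

lemma half_pow_powr:
  fixes x :: real
  shows "((1/2::real)^m) powr (- x) = (2 powr x)^m"
proof -
  have "((1/2::real)^m) powr (- x) = ((1/2::real) powr real m) powr (-x)"
    by (simp add: powr_realpow)
  also have "\<dots> = ((1/2::real) powr (-x)) powr real m" by (simp add: powr_powr mult.commute)
  also have "\<dots> = ((1/2::real) powr (-x)) ^ m" by (simp add: powr_realpow)
  also have "(1/2::real) powr (-x) = 2 powr x" by (simp add: powr_minus powr_divide)
  finally show ?thesis .
qed

lemma near_repr:
  fixes G :: "real \<Rightarrow> ennreal" and s p :: real
  assumes Gm[measurable]: "G \<in> borel_measurable borel"
  defines "q \<equiv> 2 powr (- ((1 - s) * p))"
  shows "(\<integral>\<^sup>+h. G h * ennreal (1 / \<bar>h\<bar> powr (1 + s * p)) * indicator {0<..1} h \<partial>lborel) =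
    (\<integral>\<^sup>+y. (\<Sum>m. ennreal (q ^ m) * (ennreal ((2 powr p) ^ m) * G ((1/2)^m * y)))
        * ennreal (1 / \<bar>y\<bar> powr (1 + s * p)) * indicator {1/2<..1} y \<partial>lborel)"
proof -
  let ?w = "\<lambda>h::real. ennreal (1 / \<bar>h\<bar> powr (1 + s * p))"
  let ?S = "\<lambda>m::nat. {(1/2::real)^m/2<..(1/2)^m}"
  have wm[measurable]: "(\<lambda>h::real. 1 / \<bar>h\<bar> powr (1 + s * p)) \<in> borel_measurable borel" by measurable
  have "(\<integral>\<^sup>+h. G h * ?w h * indicator {0<..1} h \<partial>lborel) = (\<integral>\<^sup>+h. (\<Sum>m. G h * ?w h * indicator (?S m) h) \<partial>lborel)"
    by (intro nn_integral_cong) (simp add: shells_indicator)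
  also have "\<dots> = (\<Sum>m. \<integral>\<^sup>+h. G h * ?w h * indicator (?S m) h \<partial>lborel)"
    by (rule nn_integral_suminf) measurable
  also have "\<dots> = (\<Sum>m. \<integral>\<^sup>+y. ennreal (q ^ m) * (ennreal ((2 powr p) ^ m) * G ((1/2)^m * y)) * ?w y * indicator {1/2<..1} y \<partial>lborel)"
  proof (rule suminf_cong)
    fix m :: nat
    define c :: real where "c = (1/2)^m"
    have c0: "0 < c" by (simp add: c_def)
    have "(\<integral>\<^sup>+h. G h * ?w h * indicator (?S m) h \<partial>lborel) = ennreal \<bar>c\<bar> * (\<integral>\<^sup>+y. G (0 + c * y) * ?w (0 + c * y) * indicator (?S m) (0 + c * y) \<partial>lborel)"
      by (rule nn_integral_real_affine) (use c0 in auto)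
    also have "\<dots> = (\<integral>\<^sup>+y. ennreal c * (G (c * y) * ?w (c * y) * indicator (?S m) (c * y)) \<partial>lborel)"
      using c0 by (subst nn_integral_cmult) auto
    also have "\<dots> = (\<integral>\<^sup>+y. ennreal (q ^ m) * (ennreal ((2 powr p) ^ m) * G ((1/2)^m * y)) * ?w y * indicator {1/2<..1} y \<partial>lborel)"
    proof (rule nn_integral_cong)
      fix y :: real
      show "ennreal c * (G (c * y) * ?w (c * y) * indicator (?S m) (c * y)) = ennreal (q ^ m) * (ennreal ((2 powr p) ^ m) * G ((1/2)^m * y)) * ?w y * indicator {1/2<..1} y"
      proof (cases "y \<in> {1/2<..1}")
        case False
        then have "c * y \<notin> ?S m" using c0 unfolding c_def by (auto simp: field_simps)
        then show ?thesis using False by simp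
      next
        case True
        then have y0: "0 < y" by auto
        have cy: "c * y \<in> ?S m" using True c0 unfolding c_def by (auto simp: field_simps)
        have "ennreal c * ?w (c * y) = ennreal (c * (1 / \<bar>c * y\<bar> powr (1 + s * p)))"
          using c0 by (simp add: ennreal_mult[symmetric])
        also have "\<dots> = ennreal (c powr (- (s * p)) * (1 / \<bar>y\<bar> powr (1 + s * p)))"
          by (simp only: w_scale[OF c0 y0])
        also have "c powr (- (s * p)) = (2 powr (s * p)) ^ m" unfolding c_def by (rule half_pow_powr)
        also have "(2 powr (s * p)) = q * 2 powr p" unfolding q_def by (simp add: powr_add[symmetric] algebra_simps)
        finally have e0: "ennreal c * ?w (c * y) = ennreal (q ^ m * (2 powr p) ^ m * (1 / \<bar>y\<bar> powr (1 + s * p)))"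
          by (simp only: power_mult_distrib)
        have pos: "0 \<le> q ^ m" "0 \<le> (2 powr p) ^ m" "0 \<le> 1 / \<bar>y\<bar> powr (1 + s * p)" by (auto simp: q_def)
        have e: "ennreal c * ?w (c * y) = ennreal (q ^ m) * ennreal ((2 powr p) ^ m) * ?w y"
          unfolding e0 by (simp only: ennreal_mult pos mult_nonneg_nonneg)
        have "ennreal c * (G (c * y) * ?w (c * y) * indicator (?S m) (c * y)) = (ennreal c * ?w (c * y)) * G (c * y)"
          using cy by (simp add: ac_simps)
        also have "\<dots> = ennreal (q ^ m) * ennreal ((2 powr p) ^ m) * ?w y * G (c * y)" by (simp only: e)
        also have "\<dots> = ennreal (q ^ m) * (ennreal ((2 powr p) ^ m) * G ((1/2)^m * y)) * ?w y * indicator {1/2<..1} y"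
          using True unfolding c_def by (simp add: ac_simps)
        finally show ?thesis .

      qed
    qed
    finally show "(\<integral>\<^sup>+h. G h * ?w h * indicator (?S m) h \<partial>lborel) = (\<integral>\<^sup>+y. ennreal (q ^ m) * (ennreal ((2 powr p) ^ m) * G ((1/2)^m * y)) * ?w y * indicator {1/2<..1} y \<partial>lborel)" .
  qed
  also have "\<dots> = (\<integral>\<^sup>+y. (\<Sum>m. ennreal (q ^ m) * (ennreal ((2 powr p) ^ m) * G ((1/2)^m * y)) * ?w y * indicator {1/2<..1} y) \<partial>lborel)"
    by (rule nn_integral_suminf[symmetric]) measurable
  also have "\<dots> = (\<integral>\<^sup>+y. (\<Sum>m. ennreal (q ^ m) * (ennreal ((2 powr p) ^ m) * G ((1/2)^m * y))) * ?w y * indicator {1/2<..1} y \<partial>lborel)"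
  proof (rule nn_integral_cong)
    fix y :: real
    let ?A = "\<lambda>m. ennreal (q ^ m) * (ennreal ((2 powr p) ^ m) * G ((1/2)^m * y))"
    have "(\<Sum>m. ?A m * ?w y * indicator {1/2<..1} y) = (\<Sum>m. ?A m * (?w y * indicator {1/2<..1} y))"
      by (simp only: mult.assoc)
    also have "\<dots> = (\<Sum>m. ?A m) * (?w y * indicator {1/2<..1} y)"
      by (rule ennreal_suminf_multc)
    finally show "(\<Sum>m. ?A m * ?w y * indicator {1/2<..1} y) = (\<Sum>m. ?A m) * ?w y * indicator {1/2<..1} y"
      by (simp only: mult.assoc)
  qed
  finally show ?thesis .
qed


lemma tail_integral:
  fixes s p :: real
  assumes sp: "0 < s * p"
  shows "(\<integral>\<^sup>+h. ennreal (1 / \<bar>h\<bar> powr (1 + s * p)) * indicator {1..} h \<partial>lborel) = ennreal (1 / (s * p))"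
proof -
  let ?F = "\<lambda>x::real. - (x powr (- (s * p))) / (s * p)"
  have "(\<integral>\<^sup>+h. ennreal (1 / \<bar>h\<bar> powr (1 + s * p)) * indicator {1..} h \<partial>lborel) = ennreal (0 - ?F 1)"
  proof (rule nn_integral_FTC_atLeast)
    show "(\<lambda>h::real. 1 / \<bar>h\<bar> powr (1 + s * p)) \<in> borel_measurable borel" by measurable
  next
    fix x :: real assume x: "1 \<le> x"
    have "(?F has_real_derivative (- ((- (s * p)) * x powr (- (s * p) - 1)) / (s * p))) (at x)"
      using x sp by (intro derivative_eq_intros) auto
    moreover have "- ((- (s * p)) * x powr (- (s * p) - 1)) / (s * p) = 1 / \<bar>x\<bar> powr (1 + s * p)"
      using x sp by (simp add: powr_minus[symmetric] powr_minus_divide divide_simps) (use sp in \<open>auto simp: powr_add[symmetric]\<close>)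
    ultimately show "(?F has_real_derivative 1 / \<bar>x\<bar> powr (1 + s * p)) (at x)" by simp
  next
    fix x :: real assume "1 \<le> x" then show "0 \<le> 1 / \<bar>x\<bar> powr (1 + s * p)" by simp
  next
    have "((\<lambda>x::real. x powr (- (s * p))) \<longlongrightarrow> 0) at_top"
      using sp by (intro tendsto_neg_powr filterlim_ident) auto
    then have "((\<lambda>x::real. - (x powr (- (s * p))) / (s * p)) \<longlongrightarrow> - 0 / (s * p)) at_top"
      using sp by (intro tendsto_intros) auto
    then show "(?F \<longlongrightarrow> 0) at_top" by simp
  qed
  then show ?thesis by simp
qed


lemma const_ineq:
  fixes p s1 s2 :: real
  assumes p: "0 < p" and s: "0 < s1" "s1 < s2" "s2 < 1"
  defines "q1 \<equiv> 2 powr (- ((1 - s1) * p))" and "q2 \<equiv> 2 powr (- ((1 - s2) * p))"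
  shows "s1 * (1 - s1) * ((1 - q2) / (1 - q1)) \<le> 2 powr ((1 - s1) * p) * (s2 * (1 - s2))"
proof -
  define a1 where "a1 = (1 - s1) * p"
  define a2 where "a2 = (1 - s2) * p"
  have a1: "0 < a1" using p s by (simp add: a1_def)
  have q1: "q1 = exp (- a1 * ln 2)" by (simp add: q1_def a1_def powr_def)
  have q2: "q2 = exp (- a2 * ln 2)" by (simp add: q2_def a2_def powr_def)
  have e1: "2 powr a1 = exp (a1 * ln 2)" by (simp add: powr_def)
  have "1 - a2 * ln 2 \<le> q2" unfolding q2 using exp_ge_add_one_self[of "- a2 * ln 2"] by simp
  then have A: "1 - q2 \<le> a2 * ln 2" by simp
  have "1 + a1 * ln 2 \<le> 2 powr a1" unfolding e1 using exp_ge_add_one_self[of "a1 * ln 2"] by simp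
  moreover have "2 powr a1 * q1 = 1" unfolding e1 q1 by (simp add: exp_add[symmetric])
  ultimately have B: "a1 * ln 2 \<le> 2 powr a1 * (1 - q1)" by (simp add: algebra_simps)
  have q1lt: "q1 < 1" unfolding q1 using a1 by simp
  have "(1 - s1) * (1 - q2) \<le> (1 - s1) * (a2 * ln 2)"
    using A s by (intro mult_left_mono) auto
  also have "\<dots> = (1 - s2) * (a1 * ln 2)" by (simp add: a1_def a2_def)
  also have "\<dots> \<le> (1 - s2) * (2 powr a1 * (1 - q1))"
    using B s by (intro mult_left_mono) auto
  finally have C: "(1 - s1) * (1 - q2) \<le> (1 - s2) * (2 powr a1 * (1 - q1))" .
  have "(1 - s1) * ((1 - q2) / (1 - q1)) \<le> (1 - s2) * 2 powr a1"
    using C q1lt by (simp add: divide_simps mult_ac)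
  then have "s1 * ((1 - s1) * ((1 - q2) / (1 - q1))) \<le> s1 * ((1 - s2) * 2 powr a1)"
    using s by (intro mult_left_mono) auto
  also have "\<dots> \<le> s2 * ((1 - s2) * 2 powr a1)"
    using s by (intro mult_right_mono) auto
  finally show ?thesis by (simp add: a1_def mult_ac)
qed

lemma oneD:
  fixes G :: "real \<Rightarrow> ennreal" and p s1 s2 :: real and B :: ennreal
  assumes Gm[measurable]: "G \<in> borel_measurable borel"
    and dbl: "\<And>h. 0 < h \<Longrightarrow> G (2 * h) \<le> ennreal (2 powr p) * G h"
    and bnd: "\<And>h. 0 < h \<Longrightarrow> G h \<le> B"
    and p: "1 < p" and s: "0 < s1" "s1 < s2" "s2 < 1"
  shows "ennreal (s1 * (1 - s1)) * (\<integral>\<^sup>+h. G h * ennreal (1 / \<bar>h\<bar> powr (1 + s1 * p)) * indicator {0<..} h \<partial>lborel)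
     \<le> ennreal (2 powr ((1 - s1) * p)) * (ennreal (s2 * (1 - s2)) * (\<integral>\<^sup>+h. G h * ennreal (1 / \<bar>h\<bar> powr (1 + s2 * p)) * indicator {0<..} h \<partial>lborel))
       + ennreal ((1 - s1) / p) * B"
proof -
  define q1 where "q1 = 2 powr (- ((1 - s1) * p))"
  define q2 where "q2 = 2 powr (- ((1 - s2) * p))"
  define K where "K = (1 - q2) / (1 - q1)"
  let ?w1 = "\<lambda>h::real. ennreal (1 / \<bar>h\<bar> powr (1 + s1 * p))"
  let ?w2 = "\<lambda>h::real. ennreal (1 / \<bar>h\<bar> powr (1 + s2 * p))"
  let ?\<Phi> = "\<lambda>y m. ennreal ((2 powr p) ^ m) * G ((1/2)^m * y)"
  have w1m[measurable]: "(\<lambda>h::real. 1 / \<bar>h\<bar> powr (1 + s1 * p)) \<in> borel_measurable borel" by measurable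
  have w2m[measurable]: "(\<lambda>h::real. 1 / \<bar>h\<bar> powr (1 + s2 * p)) \<in> borel_measurable borel" by measurable
  have q1_0: "0 \<le> q1" and q12: "q1 \<le> q2"
    using p s by (auto simp: q1_def q2_def)
  have neg: "- ((1 - s2) * p) < 0" using p s by simp
  have "q2 < 2 powr 0" unfolding q2_def by (rule powr_less_mono[OF neg]) simp
  then have q2_1: "q2 < 1" by simp
  have K0: "0 \<le> K" using q12 q2_1 by (simp add: K_def)
  define N1 where "N1 = (\<integral>\<^sup>+h. G h * ?w1 h * indicator {0<..1} h \<partial>lborel)"
  define T1 where "T1 = (\<integral>\<^sup>+h. G h * ?w1 h * indicator {1<..} h \<partial>lborel)"
  define I1 where "I1 = (\<integral>\<^sup>+h. G h * ?w1 h * indicator {0<..} h \<partial>lborel)"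
  define N2 where "N2 = (\<integral>\<^sup>+h. G h * ?w2 h * indicator {0<..1} h \<partial>lborel)"
  define I2 where "I2 = (\<integral>\<^sup>+h. G h * ?w2 h * indicator {0<..} h \<partial>lborel)"
  have I1_split: "I1 = N1 + T1"
  proof -
    have "I1 = (\<integral>\<^sup>+h. G h * ?w1 h * indicator {0<..1} h + G h * ?w1 h * indicator {1<..} h \<partial>lborel)"
      unfolding I1_def by (intro nn_integral_cong) (auto simp: indicator_def)
    also have "\<dots> = N1 + T1" unfolding N1_def T1_def by (rule nn_integral_add) measurable
    finally show ?thesis .
  qed
  have T1_le: "T1 \<le> B * ennreal (1 / (s1 * p))"
  proof -
    have "T1 \<le> (\<integral>\<^sup>+h. B * (?w1 h * indicator {1..} h) \<partial>lborel)"
      unfolding T1_def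
    proof (intro nn_integral_mono)
      fix h :: real
      show "G h * ?w1 h * indicator {1<..} h \<le> B * (?w1 h * indicator {1..} h)"
      proof (cases "1 < h")
        case True
        then have "G h \<le> B" using bnd by auto
        then show ?thesis using True by (auto intro: mult_right_mono)
      qed (simp add: indicator_def)
    qed
    also have "\<dots> = B * ennreal (1 / (s1 * p))"
      using p s by (subst nn_integral_cmult) (auto simp: tail_integral)
    finally show ?thesis .
  qed
  have pt: "(\<Sum>m. ennreal (q1 ^ m) * ?\<Phi> y m) \<le> ennreal K * (\<Sum>m. ennreal (q2 ^ m) * ?\<Phi> y m)"
    if y: "0 < y" for y
  proof -
    have inc: "incseq (?\<Phi> y)"
    proof (rule incseq_SucI)
      fix m :: nat
      have "G ((1/2)^m * y) = G (2 * ((1/2)^(Suc m) * y))" by simp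
      also have "\<dots> \<le> ennreal (2 powr p) * G ((1/2)^(Suc m) * y)"
        using y by (intro dbl) simp
      finally have "ennreal ((2 powr p) ^ m) * G ((1/2)^m * y) \<le> ennreal ((2 powr p) ^ m) * (ennreal (2 powr p) * G ((1/2)^(Suc m) * y))"
        by (intro mult_left_mono) auto
      also have "\<dots> = ennreal ((2 powr p) ^ Suc m) * G ((1/2)^(Suc m) * y)"
        by (simp add: ennreal_mult mult_ac)
      finally show "?\<Phi> y m \<le> ?\<Phi> y (Suc m)" .
    qed
    have gm: "ennreal (1 - q1) * (\<Sum>m. ennreal (q1 ^ m) * ?\<Phi> y m) \<le> ennreal (1 - q2) * (\<Sum>m. ennreal (q2 ^ m) * ?\<Phi> y m)"
      by (rule geom_mono[OF inc q1_0 q12 q2_1])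
    have "(\<Sum>m. ennreal (q1 ^ m) * ?\<Phi> y m) = ennreal (1 / (1 - q1)) * (ennreal (1 - q1) * (\<Sum>m. ennreal (q1 ^ m) * ?\<Phi> y m))"
      using q12 q2_1 by (simp add: mult.assoc[symmetric] ennreal_mult[symmetric])
    also have "\<dots> \<le> ennreal (1 / (1 - q1)) * (ennreal (1 - q2) * (\<Sum>m. ennreal (q2 ^ m) * ?\<Phi> y m))"
      by (intro mult_left_mono gm) auto
    also have "\<dots> = ennreal K * (\<Sum>m. ennreal (q2 ^ m) * ?\<Phi> y m)"
      using q12 q2_1 by (simp add: mult.assoc[symmetric] ennreal_mult[symmetric] K_def)
    finally show ?thesis .
  qed
  have N1_le: "N1 \<le> ennreal K * N2"
  proof -
    have "N1 = (\<integral>\<^sup>+y. (\<Sum>m. ennreal (q1 ^ m) * ?\<Phi> y m) * ?w1 y * indicator {1/2<..1} y \<partial>lborel)"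
      unfolding N1_def q1_def by (rule near_repr) measurable
    also have "\<dots> \<le> (\<integral>\<^sup>+y. ennreal K * ((\<Sum>m. ennreal (q2 ^ m) * ?\<Phi> y m) * ?w2 y * indicator {1/2<..1} y) \<partial>lborel)"
    proof (intro nn_integral_mono)
      fix y :: real
      show "(\<Sum>m. ennreal (q1 ^ m) * ?\<Phi> y m) * ?w1 y * indicator {1/2<..1} y \<le> ennreal K * ((\<Sum>m. ennreal (q2 ^ m) * ?\<Phi> y m) * ?w2 y * indicator {1/2<..1} y)"
      proof (cases "y \<in> {1/2<..1}")
        case True
        then have y0: "0 < y" and y1: "y \<le> 1" by auto
        have "y powr (1 + s2 * p) \<le> y powr (1 + s1 * p)"
          using y0 y1 s p by (intro powr_mono') auto
        then have "1 / \<bar>y\<bar> powr (1 + s1 * p) \<le> 1 / \<bar>y\<bar> powr (1 + s2 * p)"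
          using y0 by (auto intro!: divide_left_mono)
        then have ww: "?w1 y \<le> ?w2 y" by (rule ennreal_leI)
        have "(\<Sum>m. ennreal (q1 ^ m) * ?\<Phi> y m) * ?w1 y \<le> (ennreal K * (\<Sum>m. ennreal (q2 ^ m) * ?\<Phi> y m)) * ?w2 y"
          by (intro mult_mono pt[OF y0] ww) auto
        then show ?thesis using True by (simp add: mult_ac)
      qed simp
    qed
    also have "\<dots> = ennreal K * (\<integral>\<^sup>+y. (\<Sum>m. ennreal (q2 ^ m) * ?\<Phi> y m) * ?w2 y * indicator {1/2<..1} y \<partial>lborel)"
      by (rule nn_integral_cmult) measurable
    also have "(\<integral>\<^sup>+y. (\<Sum>m. ennreal (q2 ^ m) * ?\<Phi> y m) * ?w2 y * indicator {1/2<..1} y \<partial>lborel) = N2"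
      unfolding N2_def q2_def by (rule near_repr[symmetric]) measurable
    finally show ?thesis .
  qed
  have N2_le: "N2 \<le> I2"
    unfolding N2_def I2_def by (intro nn_integral_mono mult_left_mono) (auto simp: indicator_def)
  have "ennreal (s1 * (1 - s1)) * I1 = ennreal (s1 * (1 - s1)) * N1 + ennreal (s1 * (1 - s1)) * T1"
    by (simp add: I1_split distrib_left)
  also have "\<dots> \<le> ennreal (s1 * (1 - s1)) * (ennreal K * I2) + ennreal (s1 * (1 - s1)) * (B * ennreal (1 / (s1 * p)))"
    using N1_le N2_le T1_le by (intro add_mono mult_left_mono order.trans[OF N1_le]) auto
  also have "ennreal (s1 * (1 - s1)) * (ennreal K * I2) = ennreal (s1 * (1 - s1) * K) * I2"
    using s K0 by (simp add: ennreal_mult mult.assoc)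
  also have "ennreal (s1 * (1 - s1)) * (B * ennreal (1 / (s1 * p))) = ennreal ((1 - s1) / p) * B"
  proof -
    have "s1 * (1 - s1) * (1 / (s1 * p)) = (1 - s1) / p" using s p by (simp add: field_simps)
    then show ?thesis using s p by (simp add: ennreal_mult[symmetric] mult_ac)
  qed
  also have "ennreal (s1 * (1 - s1) * K) * I2 + ennreal ((1 - s1) / p) * B \<le> ennreal (2 powr ((1 - s1) * p)) * (ennreal (s2 * (1 - s2)) * I2) + ennreal ((1 - s1) / p) * B"
  proof (rule add_right_mono)
    have "ennreal (s1 * (1 - s1) * K) * I2 \<le> ennreal (2 powr ((1 - s1) * p) * (s2 * (1 - s2))) * I2"
      using const_ineq[of p s1 s2] p s unfolding K_def q1_def q2_def
      by (intro mult_right_mono ennreal_leI) auto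
    also have "ennreal (2 powr ((1 - s1) * p) * (s2 * (1 - s2))) * I2 = ennreal (2 powr ((1 - s1) * p)) * (ennreal (s2 * (1 - s2)) * I2)"
      using s by (simp add: ennreal_mult mult.assoc)
    finally show "ennreal (s1 * (1 - s1) * K) * I2 \<le> ennreal (2 powr ((1 - s1) * p)) * (ennreal (s2 * (1 - s2)) * I2)" .
  qed
  finally show ?thesis unfolding I1_def I2_def .
qed


lemma transl_inv:
  fixes g :: "real ^ 'n \<Rightarrow> ennreal" and c :: "real ^ 'n"
  assumes [measurable]: "g \<in> borel_measurable borel"
  shows "(\<integral>\<^sup>+x. g (x + c) \<partial>lborel) = (\<integral>\<^sup>+x. g x \<partial>lborel)"
proof -
  have "(\<integral>\<^sup>+x. g x \<partial>lborel) = (\<integral>\<^sup>+x. g x \<partial>(distr lborel borel ((+) c)))"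
    by (simp add: lborel_distr_plus)
  also have "\<dots> = (\<integral>\<^sup>+x. g (c + x) \<partial>lborel)"
    by (rule nn_integral_distr) auto
  finally show ?thesis by (simp add: add.commute)
qed

context
  fixes u :: "real ^ 'n::{finite,wellorder} \<Rightarrow> real" and p :: real
  assumes um[measurable]: "u \<in> borel_measurable borel" and p1: "1 \<le> p"
begin

definition FF :: "real \<Rightarrow> ennreal" where
  "FF h = (\<integral>\<^sup>+x. ennreal (\<bar>u (x + h *\<^sub>R e1) - u x\<bar> powr p) \<partial>lborel)"

lemma A_meas[measurable]:
  "(\<lambda>(h::real, x::real ^ 'n::{finite,wellorder}). ennreal (\<bar>u (x + h *\<^sub>R e1) - u x\<bar> powr p)) \<in> borel_measurable (lborel \<Otimes>\<^sub>M lborel)"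
proof -
  have c1: "(\<lambda>z::real \<times> (real ^ 'n::{finite,wellorder}). u (snd z + fst z *\<^sub>R e1)) \<in> borel_measurable borel"
    by (rule measurable_compose[OF _ um]) (intro borel_measurable_continuous_onI continuous_intros)
  have c2: "(\<lambda>z::real \<times> (real ^ 'n::{finite,wellorder}). u (snd z)) \<in> borel_measurable borel"
    by (rule measurable_compose[OF _ um]) (intro borel_measurable_continuous_onI continuous_intros)
  have "(\<lambda>z::real \<times> (real ^ 'n::{finite,wellorder}). ennreal (\<bar>u (snd z + fst z *\<^sub>R e1) - u (snd z)\<bar> powr p)) \<in> borel_measurable borel"
    using c1 c2 by measurable
  then show ?thesis by (simp add: lborel_prod case_prod_unfold)
qed

lemma FF_meas[measurable]: "FF \<in> borel_measurable borel"
proof -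
  have "(\<lambda>h. \<integral>\<^sup>+x. ennreal (\<bar>u (x + h *\<^sub>R e1) - u x\<bar> powr p) \<partial>lborel) \<in> borel_measurable (lborel :: real measure)"
    by (rule lborel.borel_measurable_nn_integral) (use A_meas in simp)
  then show ?thesis unfolding FF_def[abs_def] by simp
qed

lemma FF_dbl: "FF (2 * h) \<le> ennreal (2 powr p) * FF h"
proof -
  let ?g = "\<lambda>y. ennreal (\<bar>u (y + h *\<^sub>R e1) - u y\<bar> powr p)"
  have gm: "?g \<in> borel_measurable borel" by measurable
  have "FF (2 * h) \<le> (\<integral>\<^sup>+x. ennreal (2 powr (p - 1)) * (?g (x + h *\<^sub>R e1) + ?g x) \<partial>lborel)"
    unfolding FF_def
  proof (intro nn_integral_mono)
    fix x :: "real ^ 'n::{finite,wellorder}"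
    have "\<bar>u (x + (2 * h) *\<^sub>R e1) - u x\<bar> powr p = \<bar>(u ((x + h *\<^sub>R e1) + h *\<^sub>R e1) - u (x + h *\<^sub>R e1)) + (u (x + h *\<^sub>R e1) - u x)\<bar> powr p"
      by (simp add: scaleR_add_left[symmetric] add.assoc)
    also have "\<dots> \<le> 2 powr (p - 1) * (\<bar>u ((x + h *\<^sub>R e1) + h *\<^sub>R e1) - u (x + h *\<^sub>R e1)\<bar> powr p + \<bar>u (x + h *\<^sub>R e1) - u x\<bar> powr p)"
      by (rule abs_sum_powr[OF p1])
    finally show "ennreal (\<bar>u (x + (2 * h) *\<^sub>R e1) - u x\<bar> powr p) \<le> ennreal (2 powr (p - 1)) * (?g (x + h *\<^sub>R e1) + ?g x)"
      by (simp add: ennreal_mult[symmetric] ennreal_plus[symmetric] del: ennreal_plus)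
  qed
  also have "\<dots> = ennreal (2 powr (p - 1)) * ((\<integral>\<^sup>+x. ?g (x + h *\<^sub>R e1) \<partial>lborel) + (\<integral>\<^sup>+x. ?g x \<partial>lborel))"
  proof -
    have gm2: "(\<lambda>x. ?g (x + h *\<^sub>R e1)) \<in> borel_measurable borel"
      by (rule measurable_compose[OF _ gm]) (intro borel_measurable_continuous_onI continuous_intros)
    have "(\<integral>\<^sup>+x. ennreal (2 powr (p - 1)) * (?g (x + h *\<^sub>R e1) + ?g x) \<partial>lborel) = ennreal (2 powr (p - 1)) * (\<integral>\<^sup>+x. (?g (x + h *\<^sub>R e1) + ?g x) \<partial>lborel)"
      by (rule nn_integral_cmult) (use gm gm2 in simp)
    also have "(\<integral>\<^sup>+x. (?g (x + h *\<^sub>R e1) + ?g x) \<partial>lborel) = (\<integral>\<^sup>+x. ?g (x + h *\<^sub>R e1) \<partial>lborel) + (\<integral>\<^sup>+x. ?g x \<partial>lborel)"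
      by (rule nn_integral_add) (use gm gm2 in simp_all)
    finally show ?thesis .
  qed
  also have "(\<integral>\<^sup>+x. ?g (x + h *\<^sub>R e1) \<partial>lborel) = (\<integral>\<^sup>+x. ?g x \<partial>lborel)"
    by (rule transl_inv[OF gm])
  also have "ennreal (2 powr (p - 1)) * ((\<integral>\<^sup>+x. ?g x \<partial>lborel) + (\<integral>\<^sup>+x. ?g x \<partial>lborel)) = ennreal (2 powr p) * FF h"
  proof -
    have e2: "2 powr (p - 1) * 2 = (2 powr p :: real)" by (simp add: powr_diff)
    have "ennreal (2 powr (p - 1)) * ennreal 2 = ennreal (2 powr p)"
      by (subst ennreal_mult[symmetric]) (simp_all only: e2, simp_all)
    then have "ennreal (2 powr (p - 1)) * 2 = ennreal (2 powr p)" by simp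
    then show ?thesis unfolding FF_def by (simp only: mult_2[symmetric] mult.assoc[symmetric])
  qed
  finally show ?thesis .
qed

lemma FF_bnd: "FF h \<le> ennreal (2 powr p) * (\<integral>\<^sup>+x. ennreal (\<bar>u x\<bar> powr p) \<partial>lborel)"
proof -
  let ?g = "\<lambda>y. ennreal (\<bar>u y\<bar> powr p)"
  have gm: "?g \<in> borel_measurable borel" by measurable
  have "FF h \<le> (\<integral>\<^sup>+x. ennreal (2 powr (p - 1)) * (?g (x + h *\<^sub>R e1) + ?g x) \<partial>lborel)"
    unfolding FF_def
  proof (intro nn_integral_mono)
    fix x :: "real ^ 'n::{finite,wellorder}"
    have "\<bar>u (x + h *\<^sub>R e1) - u x\<bar> powr p = \<bar>u (x + h *\<^sub>R e1) + (- u x)\<bar> powr p" by simp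
    also have "\<dots> \<le> 2 powr (p - 1) * (\<bar>u (x + h *\<^sub>R e1)\<bar> powr p + \<bar>- u x\<bar> powr p)"
      by (rule abs_sum_powr[OF p1])
    finally show "ennreal (\<bar>u (x + h *\<^sub>R e1) - u x\<bar> powr p) \<le> ennreal (2 powr (p - 1)) * (?g (x + h *\<^sub>R e1) + ?g x)"
      by (simp add: ennreal_mult[symmetric] ennreal_plus[symmetric] del: ennreal_plus)
  qed
  also have "\<dots> = ennreal (2 powr (p - 1)) * ((\<integral>\<^sup>+x. ?g (x + h *\<^sub>R e1) \<partial>lborel) + (\<integral>\<^sup>+x. ?g x \<partial>lborel))"
  proof -
    have gm2: "(\<lambda>x. ?g (x + h *\<^sub>R e1)) \<in> borel_measurable borel"
      by (rule measurable_compose[OF _ gm]) (intro borel_measurable_continuous_onI continuous_intros)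
    have "(\<integral>\<^sup>+x. ennreal (2 powr (p - 1)) * (?g (x + h *\<^sub>R e1) + ?g x) \<partial>lborel) = ennreal (2 powr (p - 1)) * (\<integral>\<^sup>+x. (?g (x + h *\<^sub>R e1) + ?g x) \<partial>lborel)"
      by (rule nn_integral_cmult) (use gm gm2 in simp)
    also have "(\<integral>\<^sup>+x. (?g (x + h *\<^sub>R e1) + ?g x) \<partial>lborel) = (\<integral>\<^sup>+x. ?g (x + h *\<^sub>R e1) \<partial>lborel) + (\<integral>\<^sup>+x. ?g x \<partial>lborel)"
      by (rule nn_integral_add) (use gm gm2 in simp_all)
    finally show ?thesis .
  qed
  also have "(\<integral>\<^sup>+x. ?g (x + h *\<^sub>R e1) \<partial>lborel) = (\<integral>\<^sup>+x. ?g x \<partial>lborel)"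
    by (rule transl_inv[OF gm])
  also have "ennreal (2 powr (p - 1)) * ((\<integral>\<^sup>+x. ?g x \<partial>lborel) + (\<integral>\<^sup>+x. ?g x \<partial>lborel)) = ennreal (2 powr p) * (\<integral>\<^sup>+x. ?g x \<partial>lborel)"
  proof -
    have e2: "2 powr (p - 1) * 2 = (2 powr p :: real)" by (simp add: powr_diff)
    have "ennreal (2 powr (p - 1)) * ennreal 2 = ennreal (2 powr p)"
      by (subst ennreal_mult[symmetric]) (simp_all only: e2, simp_all)
    then have "ennreal (2 powr (p - 1)) * 2 = ennreal (2 powr p)" by simp
    then show ?thesis by (simp only: mult_2[symmetric] mult.assoc[symmetric])
  qed
  finally show ?thesis .
qed

lemma J1_FF:
  "J1 s p u = ennreal (s * (1 - s)) * (\<integral>\<^sup>+h. FF h * ennreal (1 / \<bar>h\<bar> powr (1 + s * p)) \<partial>lborel)"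
proof -
  interpret pp: pair_sigma_finite "lborel :: (real ^ 'n::{finite,wellorder}) measure" "lborel :: real measure"
    by (simp add: pair_sigma_finite_def lborel.sigma_finite_measure_axioms)
  let ?f = "\<lambda>x h. ennreal (\<bar>u (x + h *\<^sub>R e1) - u x\<bar> powr p) * ennreal (1 / \<bar>h\<bar> powr (1 + s * p))"
  have fm: "case_prod ?f \<in> borel_measurable (lborel \<Otimes>\<^sub>M lborel)"
  proof -
    have c1: "(\<lambda>z::(real ^ 'n::{finite,wellorder}) \<times> real. u (fst z + snd z *\<^sub>R e1)) \<in> borel_measurable borel"
      by (rule measurable_compose[OF _ um]) (intro borel_measurable_continuous_onI continuous_intros)
    have c2: "(\<lambda>z::(real ^ 'n::{finite,wellorder}) \<times> real. u (fst z)) \<in> borel_measurable borel"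
      by (rule measurable_compose[OF _ um]) (intro borel_measurable_continuous_onI continuous_intros)
    have "(\<lambda>z::(real ^ 'n::{finite,wellorder}) \<times> real. ennreal (\<bar>u (fst z + snd z *\<^sub>R e1) - u (fst z)\<bar> powr p) * ennreal (1 / \<bar>snd z\<bar> powr (1 + s * p))) \<in> borel_measurable borel"
    proof -
      have wm: "(\<lambda>h::real. 1 / \<bar>h\<bar> powr (1 + s * p)) \<in> borel_measurable borel" by measurable
      have c3: "(\<lambda>z::(real ^ 'n::{finite,wellorder}) \<times> real. 1 / \<bar>snd z\<bar> powr (1 + s * p)) \<in> borel_measurable borel"
        by (rule measurable_compose[OF _ wm]) (intro borel_measurable_continuous_onI continuous_intros)
      show ?thesis using c1 c2 c3 by measurable
    qed
    then show ?thesis by (simp add: lborel_prod case_prod_unfold)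
  qed
  have "J1 s p u = ennreal (s * (1 - s)) * (\<integral>\<^sup>+x. (\<integral>\<^sup>+h. ?f x h \<partial>lborel) \<partial>lborel)"
    unfolding J1_def
    by (intro arg_cong2[where f="(*)"] refl nn_integral_cong)
       (simp add: ennreal_mult[symmetric] divide_inverse)
  also have "(\<integral>\<^sup>+x. (\<integral>\<^sup>+h. ?f x h \<partial>lborel) \<partial>lborel) = (\<integral>\<^sup>+h. (\<integral>\<^sup>+x. ?f x h \<partial>lborel) \<partial>lborel)"
    by (rule lborel_pair.Fubini'[OF fm, symmetric])
  also have "\<dots> = (\<integral>\<^sup>+h. FF h * ennreal (1 / \<bar>h\<bar> powr (1 + s * p)) \<partial>lborel)"
    unfolding FF_def by (intro nn_integral_cong nn_integral_multc) measurable
  finally show ?thesis .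
qed

end


lemma split_sym:
  fixes F :: "real \<Rightarrow> ennreal" and r :: real
  assumes Fm[measurable]: "F \<in> borel_measurable borel"
  shows "(\<integral>\<^sup>+h. F h * ennreal (1 / \<bar>h\<bar> powr r) \<partial>lborel)
       = (\<integral>\<^sup>+h. (F h + F (- h)) * ennreal (1 / \<bar>h\<bar> powr r) * indicator {0<..} h \<partial>lborel)"
proof -
  let ?W = "\<lambda>h::real. ennreal (1 / \<bar>h\<bar> powr r)"
  have Wm[measurable]: "(\<lambda>h::real. 1 / \<bar>h\<bar> powr r) \<in> borel_measurable borel" by measurable
  have "(\<integral>\<^sup>+h. F h * ?W h \<partial>lborel) = (\<integral>\<^sup>+h. F h * ?W h * indicator {0<..} h + F h * ?W h * indicator {..<0} h \<partial>lborel)"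
  proof (rule nn_integral_cong)
    fix h :: real
    show "F h * ?W h = F h * ?W h * indicator {0<..} h + F h * ?W h * indicator {..<0} h"
    proof (cases "h = 0")
      case True then show ?thesis by simp
    next
      case False then show ?thesis by (cases "h > 0") (auto simp: indicator_def)
    qed
  qed
  also have "\<dots> = (\<integral>\<^sup>+h. F h * ?W h * indicator {0<..} h \<partial>lborel) + (\<integral>\<^sup>+h. F h * ?W h * indicator {..<0} h \<partial>lborel)"
    by (rule nn_integral_add) measurable
  also have "(\<integral>\<^sup>+h. F h * ?W h * indicator {..<0} h \<partial>lborel) = ennreal \<bar>-1\<bar> * (\<integral>\<^sup>+h. F (0 + -1 * h) * ?W (0 + -1 * h) * indicator {..<0} (0 + -1 * h) \<partial>lborel)"
  proof -
    have m: "(\<lambda>h. F h * ?W h * indicator {..<0} h) \<in> borel_measurable borel" by measurable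
    show ?thesis by (rule nn_integral_real_affine[OF m]) simp
  qed
  also have "\<dots> = (\<integral>\<^sup>+h. F (- h) * ?W h * indicator {0<..} h \<partial>lborel)"
    by (simp add: indicator_def)
  also have "(\<integral>\<^sup>+h. F h * ?W h * indicator {0<..} h \<partial>lborel) + (\<integral>\<^sup>+h. F (- h) * ?W h * indicator {0<..} h \<partial>lborel)
      = (\<integral>\<^sup>+h. F h * ?W h * indicator {0<..} h + F (- h) * ?W h * indicator {0<..} h \<partial>lborel)"
    by (rule nn_integral_add[symmetric]) measurable
  also have "\<dots> = (\<integral>\<^sup>+h. (F h + F (- h)) * ?W h * indicator {0<..} h \<partial>lborel)"
    by (simp add: distrib_right)
  finally show ?thesis .
qed

theorem lemma2p6:
  fixes u :: "real ^ 'n::{finite,wellorder} \<Rightarrow> real" and p s1 s2 :: real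
  assumes "1 < p" and "0 < s1" and "s1 < s2" and "s2 < 1"
    and "in_Lp p u"
  shows "J1 s1 p u \<le> ennreal (2 powr ((1 - s1) * p)) * J1 s2 p u
           + ennreal ((1 - s1) * 2 powr (p + 1) / p) * (\<integral>\<^sup>+ x. ennreal (\<bar>u x\<bar> powr p) \<partial>lborel)"
proof -
  have um: "u \<in> borel_measurable borel" using assms(5) by (simp add: in_Lp_def)
  have p1: "1 \<le> p" using assms(1) by simp
  define N where "N = (\<integral>\<^sup>+ x. ennreal (\<bar>u x\<bar> powr p) \<partial>lborel)"
  define G where "G h = FF u p h + FF u p (- h)" for h
  have FFm[measurable]: "FF u p \<in> borel_measurable borel" by (rule FF_meas[OF um p1])
  have Gm: "G \<in> borel_measurable borel" unfolding G_def by measurable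
  have dbl: "G (2 * h) \<le> ennreal (2 powr p) * G h" for h
  proof -
    have "G (2 * h) = FF u p (2 * h) + FF u p (2 * (- h))" by (simp add: G_def)
    also have "\<dots> \<le> ennreal (2 powr p) * FF u p h + ennreal (2 powr p) * FF u p (- h)"
      by (intro add_mono FF_dbl[OF um p1])
    also have "\<dots> = ennreal (2 powr p) * G h" by (simp add: G_def distrib_left)
    finally show ?thesis .
  qed
  have bnd: "G h \<le> ennreal (2 powr p) * N + ennreal (2 powr p) * N" for h
    unfolding G_def N_def by (intro add_mono FF_bnd[OF um p1])
  have J: "J1 s p u = ennreal (s * (1 - s)) * (\<integral>\<^sup>+h. G h * ennreal (1 / \<bar>h\<bar> powr (1 + s * p)) * indicator {0<..} h \<partial>lborel)" for s
    unfolding J1_FF[OF um p1] G_def by (subst split_sym[OF FFm]) (rule refl)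
  have main: "ennreal (s1 * (1 - s1)) * (\<integral>\<^sup>+h. G h * ennreal (1 / \<bar>h\<bar> powr (1 + s1 * p)) * indicator {0<..} h \<partial>lborel)
     \<le> ennreal (2 powr ((1 - s1) * p)) * (ennreal (s2 * (1 - s2)) * (\<integral>\<^sup>+h. G h * ennreal (1 / \<bar>h\<bar> powr (1 + s2 * p)) * indicator {0<..} h \<partial>lborel))
       + ennreal ((1 - s1) / p) * (ennreal (2 powr p) * N + ennreal (2 powr p) * N)"
    by (rule oneD[OF Gm dbl bnd assms(1-4)])
  have eqB: "ennreal ((1 - s1) / p) * (ennreal (2 powr p) * N + ennreal (2 powr p) * N) = ennreal ((1 - s1) * 2 powr (p + 1) / p) * N"
  proof -
    have r: "(1 - s1) / p * (2 powr p * 2) = (1 - s1) * 2 powr (p + 1) / p"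
      by (simp add: powr_add)
    have "ennreal (2 powr p) * N + ennreal (2 powr p) * N = ennreal (2 powr p * 2) * N"
      by (simp add: ennreal_mult mult_2_right[symmetric] distrib_left mult_ac)
    moreover have x0: "0 \<le> (1 - s1) / p" using assms by simp
    moreover have "ennreal ((1 - s1) / p) * (ennreal (2 powr p * 2) * N) = (ennreal ((1 - s1) / p) * ennreal (2 powr p * 2)) * N"
      by (rule mult.assoc[symmetric])
    moreover have "ennreal ((1 - s1) / p) * ennreal (2 powr p * 2) = ennreal ((1 - s1) / p * (2 powr p * 2))"
      by (rule ennreal_mult[symmetric, OF x0]) simp
    ultimately have "ennreal ((1 - s1) / p) * (ennreal (2 powr p) * N + ennreal (2 powr p) * N) = ennreal ((1 - s1) / p * (2 powr p * 2)) * N"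
      by simp
    then show ?thesis by (simp only: r)
  qed
  show ?thesis using main[unfolded eqB] unfolding J[of s1] J[of s2] N_def .
qed

end
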